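(* Let $\Lambda$ be a row-finite $k$-graph with no sources and let $v\in\Lambda^0$. If $y$ belongs to the saturation of the set $\{x\in\Lambda^0: v\le x\}$, then there exists $z\in\Lambda^0$ such that $v\le z$ and $y\le z$.
   Context: A $k$-graph is a countable category $\Lambda$ with a functor $d:\Lambda\to\mathbb{N}^k$ satisfying the factorization property: whenever $d(\lambda)=m+n$ there are unique $\mu,\nu$ with $\lambda=\mu\nu$, $d(\mu)=m$, $d(\nu)=n$. $\Lambda^n=d^{-1}(n)$, $\Lambda^0$ is the set of vertices, $r,s$ are range and source; $v\Lambda^n=\{\lambda: r(\lambda)=v,d(\lambda)=n\}$, $v\Lambda w=\{\lambda:r(\lambda)=v,s(\lambda)=w\}$. Row-finite: each $v\Lambda^n$ finite; no sources: $v\Lambda^{e_i}\ne\emptyset$ for all $v$, $i$ ($e_1,\dots,e_k$ the standard generators of $\mathbb{N}^k$). For vertices, $v\le w$ means $v\Lambda w\neq\emptyset$. A set $H\subseteq\Lambda^0$ is saturated if for every $v\in\Lambda^0$: if $r^{-1}(v)\neq\emptyset$ and $\{s(\lambda):\lambda\in v\Lambda^{e_i}\}\subseteq H$ for some $i\in\{1,\dots,k\}$ then $v\in H$. The saturation of a set is the smallest saturated subset of $\Lambda^0$ containing it. *)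

theory Defs
  imports Main "HOL-Library.Countable_Set"
begin

text \<open>A k-graph is presented as a small category with vertex set V (objects),
morphism set L, range r, source s, composition cmp (cmp l m = l m, defined when
s l = r m), identities ident, and a degree functor d into N^k, where N^k is
represented as 'k \<Rightarrow> nat for a finite index type 'k (so k = CARD('k)).\<close>

definition kgraph ::
  "'v set \<Rightarrow> 'm set \<Rightarrow> ('m \<Rightarrow> 'v) \<Rightarrow> ('m \<Rightarrow> 'v) \<Rightarrow> ('m \<Rightarrow> 'm \<Rightarrow> 'm) \<Rightarrow> ('v \<Rightarrow> 'm)
   \<Rightarrow> ('m \<Rightarrow> ('k::finite \<Rightarrow> nat)) \<Rightarrow> bool" where
  "kgraph V L r s cmp ident d \<longleftrightarrow>
     countable L \<and>
     (\<forall>l\<in>L. r l \<in> V \<and> s l \<in> V) \<and>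
     (\<forall>v\<in>V. ident v \<in> L \<and> r (ident v) = v \<and> s (ident v) = v) \<and>
     (\<forall>l\<in>L. \<forall>m\<in>L. s l = r m \<longrightarrow>
        cmp l m \<in> L \<and> r (cmp l m) = r l \<and> s (cmp l m) = s m) \<and>
     (\<forall>l\<in>L. \<forall>m\<in>L. \<forall>n\<in>L. s l = r m \<and> s m = r n \<longrightarrow>
        cmp (cmp l m) n = cmp l (cmp m n)) \<and>
     (\<forall>l\<in>L. cmp (ident (r l)) l = l \<and> cmp l (ident (s l)) = l) \<and>
     (\<forall>v\<in>V. d (ident v) = (\<lambda>i. 0)) \<and>
     (\<forall>l\<in>L. \<forall>m\<in>L. s l = r m \<longrightarrow> d (cmp l m) = (\<lambda>i. d l i + d m i)) \<and>
     (\<forall>l\<in>L. \<forall>p q. d l = (\<lambda>i. p i + q i) \<longrightarrow>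
        (\<exists>!(a, b). a \<in> L \<and> b \<in> L \<and> s a = r b \<and> l = cmp a b \<and> d a = p \<and> d b = q))"

definition unitdeg :: "'k \<Rightarrow> ('k \<Rightarrow> nat)" where
  "unitdeg i = (\<lambda>j. if j = i then 1 else 0)"

definition row_finite :: "'v set \<Rightarrow> 'm set \<Rightarrow> ('m \<Rightarrow> 'v) \<Rightarrow> ('m \<Rightarrow> 'k \<Rightarrow> nat) \<Rightarrow> bool" where
  "row_finite V L r d \<longleftrightarrow> (\<forall>v\<in>V. \<forall>n. finite {l\<in>L. r l = v \<and> d l = n})"

definition no_sources :: "'v set \<Rightarrow> 'm set \<Rightarrow> ('m \<Rightarrow> 'v) \<Rightarrow> ('m \<Rightarrow> 'k \<Rightarrow> nat) \<Rightarrow> bool" where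
  "no_sources V L r d \<longleftrightarrow> (\<forall>v\<in>V. \<forall>i. {l\<in>L. r l = v \<and> d l = unitdeg i} \<noteq> {})"

definition vle :: "'m set \<Rightarrow> ('m \<Rightarrow> 'v) \<Rightarrow> ('m \<Rightarrow> 'v) \<Rightarrow> 'v \<Rightarrow> 'v \<Rightarrow> bool" where
  "vle L r s v w \<longleftrightarrow> (\<exists>l\<in>L. r l = v \<and> s l = w)"

definition saturated ::
  "'v set \<Rightarrow> 'm set \<Rightarrow> ('m \<Rightarrow> 'v) \<Rightarrow> ('m \<Rightarrow> 'v) \<Rightarrow> ('m \<Rightarrow> 'k \<Rightarrow> nat) \<Rightarrow> 'v set \<Rightarrow> bool" where
  "saturated V L r s d H \<longleftrightarrow>
     (\<forall>v\<in>V. ((\<exists>l\<in>L. r l = v) \<and>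
              (\<exists>i. {s l | l. l \<in> L \<and> r l = v \<and> d l = unitdeg i} \<subseteq> H)) \<longrightarrow> v \<in> H)"

definition saturation ::
  "'v set \<Rightarrow> 'm set \<Rightarrow> ('m \<Rightarrow> 'v) \<Rightarrow> ('m \<Rightarrow> 'v) \<Rightarrow> ('m \<Rightarrow> 'k \<Rightarrow> nat) \<Rightarrow> 'v set \<Rightarrow> 'v set" where
  "saturation V L r s d X = \<Inter>{H. H \<subseteq> V \<and> X \<subseteq> H \<and> saturated V L r s d H}"

end

theory Submission
  imports Defs
begin

theorem lemma2p14:
  fixes V :: "'v set" and L :: "'m set" and r s :: "'m \<Rightarrow> 'v"
    and cmp :: "'m \<Rightarrow> 'm \<Rightarrow> 'm" and ident :: "'v \<Rightarrow> 'm"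
    and d :: "'m \<Rightarrow> ('k::finite \<Rightarrow> nat)" and v y :: 'v
  assumes "kgraph V L r s cmp ident d"
    and "row_finite V L r d"
    and "no_sources V L r d"
    and "v \<in> V"
    and "y \<in> saturation V L r s d {x\<in>V. vle L r s v x}"
  shows "\<exists>z\<in>V. vle L r s v z \<and> vle L r s y z"
proof -
  note kg = assms(1)[unfolded kgraph_def]
  define H where "H = {x\<in>V. \<exists>z\<in>V. vle L r s v z \<and> vle L r s x z}"
  have sub: "H \<subseteq> V" unfolding H_def by blast
  have X: "{x\<in>V. vle L r s v x} \<subseteq> H"
  proof
    fix x assume "x \<in> {x\<in>V. vle L r s v x}"
    then have x: "x \<in> V" "vle L r s v x" by auto
    have "vle L r s x x" unfolding vle_def using kg x(1) by metis
    then show "x \<in> H" unfolding H_def using x by blast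
  qed
  have sat: "saturated V L r s d H"
    unfolding saturated_def
  proof (intro ballI impI)
    fix w assume w: "w \<in> V"
      and h: "(\<exists>l\<in>L. r l = w) \<and> (\<exists>i. {s l | l. l \<in> L \<and> r l = w \<and> d l = unitdeg i} \<subseteq> H)"
    then obtain i where i: "{s l | l. l \<in> L \<and> r l = w \<and> d l = unitdeg i} \<subseteq> H" by blast
    obtain l where l: "l \<in> L" "r l = w" "d l = unitdeg i"
      using assms(3) w unfolding no_sources_def by blast
    have "s l \<in> H" using i l by blast
    then obtain z m where z: "z \<in> V" "vle L r s v z" "m \<in> L" "r m = s l" "s m = z"
      unfolding H_def vle_def by blast
    have "cmp l m \<in> L \<and> r (cmp l m) = w \<and> s (cmp l m) = z"
      using kg l z by metis
    then have "vle L r s w z" unfolding vle_def by blast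
    then show "w \<in> H" unfolding H_def using w z by blast
  qed
  have "y \<in> H" using assms(5) sub X sat unfolding saturation_def by blast
  then show ?thesis unfolding H_def by blast
qed

end
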